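(* Let $K$ be a simplicial complex on the vertex set $[m]$. If $K_{I\cup J}=\partial\Delta^I*\partial\Delta^J$ for some non-empty $I,J\subset[m]$ with $I\cap J=\emptyset$, then $K$ is not Golod, i.e. $\Bbbk[K]$ is not Golod for any commutative ring $\Bbbk$.
   Context: $K_S=\{\sigma\in K\mid\sigma\subset S\}$ is the full subcomplex on $S$; $\Delta^S$ is the full simplex on a finite set $S$, $\partial\Delta^S$ its boundary (all proper subsets of $S$), and $*$ is the join. The Stanley–Reisner ring is $\Bbbk[K]=\Bbbk[v_1,\ldots,v_m]/(v_I\mid I\notin K)$, $|v_i|=2$, $v_I=\prod_{i\in I}v_i$; it is Golod if all products and (higher) Massey products in the positive-degree part of $\mathrm{Tor}_{\Bbbk[v_1,\ldots,v_m]}(\Bbbk[K],\Bbbk)$ are trivial, with these operations induced from the Koszul resolution of $\Bbbk$ tensored with $\Bbbk[K]$. *)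

theory Defs
  imports Main
begin

definition simplicial_complex :: "nat \<Rightarrow> nat set set \<Rightarrow> bool" where
  "simplicial_complex m K \<longleftrightarrow> K \<subseteq> Pow {1..m} \<and> {} \<in> K \<and>
     (\<forall>\<sigma> \<tau>. \<sigma> \<in> K \<and> \<tau> \<subseteq> \<sigma> \<longrightarrow> \<tau> \<in> K)"

definition full_subcomplex :: "nat set set \<Rightarrow> nat set \<Rightarrow> nat set set" where
  "full_subcomplex K S = {\<sigma> \<in> K. \<sigma> \<subseteq> S}"

definition simplex_boundary :: "nat set \<Rightarrow> nat set set" where
  "simplex_boundary S = {\<sigma>. \<sigma> \<subset> S}"

definition sc_join :: "nat set set \<Rightarrow> nat set set \<Rightarrow> nat set set" where
  "sc_join A B = {\<sigma> \<union> \<tau> | \<sigma> \<tau>. \<sigma> \<in> A \<and> \<tau> \<in> B}"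

section \<open>Koszul complex \<Lambda>[u_1..u_m] \<otimes> k[K], in the standard basis u_J v^\<alpha>, supp \<alpha> \<in> K\<close>

type_synonym 'k kel = "nat set \<times> (nat \<Rightarrow> nat) \<Rightarrow> 'k"

definition kbasis :: "nat \<Rightarrow> nat set set \<Rightarrow> (nat set \<times> (nat \<Rightarrow> nat)) set" where
  "kbasis m K = {(J, \<alpha>). J \<subseteq> {1..m} \<and> (\<forall>i. i \<notin> {1..m} \<longrightarrow> \<alpha> i = 0) \<and> {i. \<alpha> i \<noteq> 0} \<in> K}"

definition ksupp :: "'k::zero kel \<Rightarrow> (nat set \<times> (nat \<Rightarrow> nat)) set" where
  "ksupp x = {b. x b \<noteq> 0}"

definition kelem :: "nat \<Rightarrow> nat set set \<Rightarrow> 'k::zero kel \<Rightarrow> bool" where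
  "kelem m K x \<longleftrightarrow> finite (ksupp x) \<and> ksupp x \<subseteq> kbasis m K"

text \<open>sign of u_A u_B = (sign) u_{A \<union> B} for disjoint A, B\<close>
definition ext_sign :: "nat set \<Rightarrow> nat set \<Rightarrow> 'k::comm_ring_1" where
  "ext_sign A B = (-1) ^ card {(a, b). a \<in> A \<and> b \<in> B \<and> b < a}"

definition kmult :: "nat \<Rightarrow> nat set set \<Rightarrow> 'k::comm_ring_1 kel \<Rightarrow> 'k kel \<Rightarrow> 'k kel" where
  "kmult m K x y = (\<lambda>(J, \<gamma>). if (J, \<gamma>) \<in> kbasis m K then
      (\<Sum>p \<in> {(b1, b2) \<in> ksupp x \<times> ksupp y. fst b1 \<inter> fst b2 = {} \<and> fst b1 \<union> fst b2 = J
                \<and> (\<lambda>i. snd b1 i + snd b2 i) = \<gamma>}.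
          ext_sign (fst (fst p)) (fst (snd p)) * x (fst p) * y (snd p))
    else 0)"

text \<open>Koszul differential d(u_j) = v_j, d(v_j) = 0, extended as a derivation\<close>
definition kdiff :: "nat \<Rightarrow> nat set set \<Rightarrow> 'k::comm_ring_1 kel \<Rightarrow> 'k kel" where
  "kdiff m K x = (\<lambda>(J, \<gamma>). if (J, \<gamma>) \<in> kbasis m K then
      (\<Sum>j \<in> {j \<in> {1..m}. j \<notin> J \<and> 1 \<le> \<gamma> j}.
          (-1) ^ card {l \<in> J. l < j} * x (insert j J, \<gamma>(j := \<gamma> j - 1)))
    else 0)"

text \<open>total degree of u_J v^\<alpha> (|u_i| = 1 = -1+2, |v_i| = 2), and a-bar = (-1)^(1+deg a) a\<close>
definition kdeg :: "nat \<Rightarrow> nat set \<times> (nat \<Rightarrow> nat) \<Rightarrow> nat" where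
  "kdeg m b = card (fst b) + 2 * (\<Sum>i\<in>{1..m}. snd b i)"

definition kbar :: "'k::comm_ring_1 kel \<Rightarrow> 'k kel" where
  "kbar x = (\<lambda>(J, \<alpha>). (-1) ^ Suc (card J) * x (J, \<alpha>))"

definition kcycle :: "nat \<Rightarrow> nat set set \<Rightarrow> 'k::comm_ring_1 kel \<Rightarrow> bool" where
  "kcycle m K x \<longleftrightarrow> kelem m K x \<and> kdiff m K x = (\<lambda>_. 0)"

definition kboundary :: "nat \<Rightarrow> nat set set \<Rightarrow> 'k::comm_ring_1 kel \<Rightarrow> bool" where
  "kboundary m K x \<longleftrightarrow> (\<exists>y. kelem m K y \<and> kdiff m K y = x)"

definition khomologous :: "nat \<Rightarrow> nat set set \<Rightarrow> 'k::comm_ring_1 kel \<Rightarrow> 'k kel \<Rightarrow> bool" where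
  "khomologous m K x y \<longleftrightarrow> kboundary m K (\<lambda>b. x b - y b)"

definition kpositive :: "nat \<Rightarrow> 'k::zero kel \<Rightarrow> bool" where
  "kpositive m x \<longleftrightarrow> (\<exists>t>0. \<forall>b \<in> ksupp x. kdeg m b = t)"

definition defining_system :: "nat \<Rightarrow> nat set set \<Rightarrow> nat \<Rightarrow> (nat \<Rightarrow> 'k::comm_ring_1 kel)
    \<Rightarrow> (nat \<Rightarrow> nat \<Rightarrow> 'k kel) \<Rightarrow> bool" where
  "defining_system m K n c A \<longleftrightarrow>
     (\<forall>i\<in>{1..n}. kelem m K (A i i) \<and> khomologous m K (A i i) (c i)) \<and>
     (\<forall>i j. 1 \<le> i \<and> i < j \<and> j \<le> n \<and> (i, j) \<noteq> (1, n) \<longrightarrow>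
        kelem m K (A i j) \<and>
        kdiff m K (A i j) = (\<lambda>b. \<Sum>k\<in>{i..<j}. kmult m K (kbar (A i k)) (A (Suc k) j) b))"

definition massey_value :: "nat \<Rightarrow> nat set set \<Rightarrow> nat \<Rightarrow> (nat \<Rightarrow> nat \<Rightarrow> 'k::comm_ring_1 kel) \<Rightarrow> 'k kel" where
  "massey_value m K n A = (\<lambda>b. \<Sum>k\<in>{1..<n}. kmult m K (kbar (A 1 k)) (A (Suc k) n) b)"

text \<open>k[K] is Golod: every (n \<ge> 2)-fold product / Massey product of positive-degree
  classes of Tor(k[K],k) = H(\<Lambda>[u] \<otimes> k[K], d) contains zero whenever it is defined\<close>
definition golod :: "'k::comm_ring_1 itself \<Rightarrow> nat \<Rightarrow> nat set set \<Rightarrow> bool" where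
  "golod _ m K \<longleftrightarrow>
     (\<forall>n \<ge> 2. \<forall>c :: nat \<Rightarrow> 'k kel.
        (\<forall>i\<in>{1..n}. kcycle m K (c i) \<and> kpositive m (c i)) \<longrightarrow>
        (\<exists>A. defining_system m K n c A) \<longrightarrow>
        (\<exists>A. defining_system m K n c A \<and> kboundary m K (massey_value m K n A)))"

end

theory Submission
  imports Defs
begin


definition cnt :: "nat set \<Rightarrow> nat \<Rightarrow> nat" where "cnt A j = card {l\<in>A. l < j}"
definition gtc :: "nat set \<Rightarrow> nat \<Rightarrow> nat" where "gtc A j = card {l\<in>A. j < l}"

lemma cnt_gtc: "finite A \<Longrightarrow> j \<notin> A \<Longrightarrow> cnt A j + gtc A j = card A"
proof -
  assume f: "finite A" and j: "j \<notin> A"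
  have "A = {l\<in>A. l < j} \<union> {l\<in>A. j < l}" using j by (auto, metis linorder_neqE_nat)
  moreover have "{l\<in>A. l < j} \<inter> {l\<in>A. j < l} = {}" by auto
  ultimately show ?thesis unfolding cnt_def gtc_def using f
    by (metis (no_types, lifting) card_Un_disjoint finite_Un)
qed

lemma cnt_Un: "finite A \<Longrightarrow> finite B \<Longrightarrow> A \<inter> B = {} \<Longrightarrow> cnt (A \<union> B) j = cnt A j + cnt B j"
proof -
  assume f: "finite A" "finite B" "A \<inter> B = {}"
  have "{l\<in>A\<union>B. l < j} = {l\<in>A. l < j} \<union> {l\<in>B. l < j}" by auto
  thus ?thesis unfolding cnt_def using f by (simp add: card_Un_disjoint disjoint_iff)
qed

definition inv :: "nat set \<Rightarrow> nat set \<Rightarrow> nat" where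
  "inv A B = card {(a, b). a \<in> A \<and> b \<in> B \<and> b < a}"

lemma ext_sign_inv: "ext_sign A B = (-1) ^ inv A B"
  unfolding ext_sign_def inv_def by simp

lemma inv_insert1: "finite A \<Longrightarrow> finite B \<Longrightarrow> j \<notin> A \<Longrightarrow> inv (insert j A) B = inv A B + cnt B j"
proof -
  assume f: "finite A" "finite B" "j \<notin> A"
  have e: "{(a, b). a \<in> insert j A \<and> b \<in> B \<and> b < a} = {(a, b). a \<in> A \<and> b \<in> B \<and> b < a} \<union> (\<lambda>b. (j,b)) ` {l\<in>B. l < j}" by auto
  have fin: "finite {(a, b). a \<in> A \<and> b \<in> B \<and> b < a}"
    by (rule finite_subset[of _ "A \<times> B"]) (use f in auto)
  have "card ((\<lambda>b. (j,b)) ` {l\<in>B. l < j}) = card {l\<in>B. l < j}" by (rule card_image) (auto simp: inj_on_def)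
  thus ?thesis unfolding inv_def cnt_def e using f fin
    by (subst card_Un_disjoint) auto
qed

lemma inv_insert2: "finite A \<Longrightarrow> finite B \<Longrightarrow> j \<notin> B \<Longrightarrow> inv A (insert j B) = inv A B + gtc A j"
proof -
  assume f: "finite A" "finite B" "j \<notin> B"
  have e: "{(a, b). a \<in> A \<and> b \<in> insert j B \<and> b < a} = {(a, b). a \<in> A \<and> b \<in> B \<and> b < a} \<union> (\<lambda>a. (a,j)) ` {l\<in>A. j < l}" by auto
  have fin: "finite {(a, b). a \<in> A \<and> b \<in> B \<and> b < a}"
    by (rule finite_subset[of _ "A \<times> B"]) (use f in auto)
  have "card ((\<lambda>a. (a,j)) ` {l\<in>A. j < l}) = card {l\<in>A. j < l}" by (rule card_image) (auto simp: inj_on_def)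
  thus ?thesis unfolding inv_def gtc_def e using f fin
    by (subst card_Un_disjoint) auto
qed

definition sg :: "nat set \<Rightarrow> nat \<Rightarrow> 'k::comm_ring_1" where "sg A j = (-1) ^ cnt A j"

lemma m1_eq: "even (a + b) \<Longrightarrow> (-1::'k::comm_ring_1) ^ a = (-1) ^ b"
  by (metis (no_types, lifting) even_add minus_one_power_iff)
lemma m1_neq: "odd (a + b) \<Longrightarrow> (-1::'k::comm_ring_1) ^ a = - ((-1) ^ b)"
  by (auto simp add: minus_one_power_iff)

lemma sign1: "finite A \<Longrightarrow> finite B \<Longrightarrow> j \<notin> A \<Longrightarrow> j \<notin> B \<Longrightarrow> A \<inter> B = {} \<Longrightarrow>
  (sg (A \<union> B) j :: 'k::comm_ring_1) * ext_sign (insert j A) B = ext_sign A B * sg A j"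
  unfolding sg_def ext_sign_inv
  apply (simp add: inv_insert1 cnt_Un power_add[symmetric])
  apply (rule m1_eq) by presburger

lemma sign2: "finite A \<Longrightarrow> finite B \<Longrightarrow> j \<notin> A \<Longrightarrow> j \<notin> B \<Longrightarrow> A \<inter> B = {} \<Longrightarrow>
  (sg (A \<union> B) j :: 'k::comm_ring_1) * ext_sign A (insert j B) = ext_sign A B * (-1) ^ card A * sg B j"
proof -
  assume a: "finite A" "finite B" "j \<notin> A" "j \<notin> B" "A \<inter> B = {}"
  have "cnt A j + gtc A j = card A" using a cnt_gtc by blast
  thus ?thesis using a unfolding sg_def ext_sign_inv
    apply (simp add: inv_insert2 cnt_Un power_add[symmetric])
    apply (rule m1_eq) by presburger
qed

lemma sign3: "finite A \<Longrightarrow> finite B \<Longrightarrow> j \<notin> A \<Longrightarrow> j \<notin> B \<Longrightarrow> A \<inter> B = {} \<Longrightarrow>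
  (ext_sign A (insert j B) :: 'k::comm_ring_1) * sg A j = - (ext_sign (insert j A) B * (-1) ^ card (insert j A) * sg B j)"
proof -
  assume a: "finite A" "finite B" "j \<notin> A" "j \<notin> B" "A \<inter> B = {}"
  have "cnt A j + gtc A j = card A" using a cnt_gtc by blast
  thus ?thesis using a unfolding sg_def ext_sign_inv
    apply (simp add: inv_insert2 inv_insert1 power_add[symmetric])
    apply (rule m1_eq) by presburger
qed



definition dec :: "nat set \<times> (nat \<Rightarrow> nat) \<Rightarrow> ((nat set \<times> (nat \<Rightarrow> nat)) \<times> (nat set \<times> (nat \<Rightarrow> nat))) set" where
  "dec b = {(b1, b2). fst b1 \<inter> fst b2 = {} \<and> fst b1 \<union> fst b2 = fst b \<and> (\<lambda>i. snd b1 i + snd b2 i) = snd b}"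

definition tm :: "'k::comm_ring_1 kel \<Rightarrow> 'k kel \<Rightarrow> (nat set \<times> (nat \<Rightarrow> nat)) \<times> (nat set \<times> (nat \<Rightarrow> nat)) \<Rightarrow> 'k" where
  "tm x y p = ext_sign (fst (fst p)) (fst (snd p)) * x (fst p) * y (snd p)"

definition ds :: "nat \<Rightarrow> nat set \<times> (nat \<Rightarrow> nat) \<Rightarrow> nat set" where
  "ds m b = {j \<in> {1..m}. j \<notin> fst b \<and> 1 \<le> snd b j}"

lemma finite_dec:
  assumes "finite J" "\<forall>i. i \<notin> {1..m} \<longrightarrow> g i = 0"
  shows "finite (dec (J, g))"
proof -
  define M where "M = Max (g ` {1..m})"
  have gM: "g i \<le> M" if "i \<in> {1..m}" for i unfolding M_def using that by simp
  let ?F = "{a. \<forall>i. (i \<in> {1..m} \<longrightarrow> a i \<in> {0..M}) \<and> (i \<notin> {1..m} \<longrightarrow> a i = 0)}"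
  have fF: "finite ?F" by (rule finite_set_of_finite_funs) auto
  have "dec (J, g) \<subseteq> (\<lambda>(A,a). ((A,a),(J-A, \<lambda>i. g i - a i))) ` (Pow J \<times> ?F)"
  proof
    fix p assume p: "p \<in> dec (J, g)"
    obtain A a B c where pe: "p = ((A,a),(B,c))" by (metis prod.collapse)
    have h: "A \<inter> B = {}" "A \<union> B = J" and h3: "(\<lambda>i. a i + c i) = g" using p unfolding pe dec_def
      by auto
    have h4: "a i + c i = g i" for i using h3 by metis
    note h = h h4
    have "\<forall>i. (i \<in> {1..m} \<longrightarrow> a i \<in> {0..M}) \<and> (i \<notin> {1..m} \<longrightarrow> a i = 0)"
    proof (intro allI conjI impI)
      fix i assume "i \<in> {1..m}" thus "a i \<in> {0..M}" using gM[of i] h(3)[of i] by auto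
    next
      fix i assume "i \<notin> {1..m}" thus "a i = 0" using assms(2) h(3)[of i] by auto
    qed
    hence "a \<in> ?F" by simp
    moreover have "B = J - A" "c = (\<lambda>i. g i - a i)" using h by (auto simp: fun_eq_iff, metis add_diff_cancel_left')
    ultimately show "p \<in> (\<lambda>(A,a). ((A,a),(J-A, \<lambda>i. g i - a i))) ` (Pow J \<times> ?F)"
      unfolding pe using h by (auto intro!: image_eqI[of _ _ "(A,a)"])
  qed
  moreover have "finite (Pow J \<times> ?F)" using assms(1) fF by simp
  ultimately show ?thesis using finite_subset by blast
qed

lemma kbasis_D: "(J, g) \<in> kbasis m K \<Longrightarrow> J \<subseteq> {1..m} \<and> (\<forall>i. i \<notin> {1..m} \<longrightarrow> g i = 0) \<and> {i. g i \<noteq> 0} \<in> K"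
  unfolding kbasis_def by auto

lemma finite_dec_kb: "b \<in> kbasis m K \<Longrightarrow> finite (dec b)"
  by (cases b) (metis finite_dec kbasis_D finite_atLeastAtMost finite_subset)

lemma mult_eq:
  assumes "b \<in> kbasis m K"
  shows "kmult m K x y b = (\<Sum>p\<in>dec b. tm x y p)"
proof -
  obtain J g where be: "b = (J, g)" by fastforce
  let ?Q = "{(b1, b2) \<in> ksupp x \<times> ksupp y. fst b1 \<inter> fst b2 = {} \<and> fst b1 \<union> fst b2 = J
                \<and> (\<lambda>i. snd b1 i + snd b2 i) = g}"
  have "kmult m K x y b = (\<Sum>p\<in>?Q. tm x y p)" using assms unfolding be kmult_def tm_def by simp
  also have "\<dots> = (\<Sum>p\<in>dec b. tm x y p)"
    apply (rule sum.mono_neutral_left)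
    using finite_dec_kb[OF assms] apply simp
    unfolding be dec_def apply auto[1]
    unfolding tm_def ksupp_def by auto
  finally show ?thesis .
qed

lemma diff_eq:
  assumes "b \<in> kbasis m K"
  shows "kdiff m K x b = (\<Sum>j\<in>ds m b. sg (fst b) j * x (insert j (fst b), (snd b)(j := snd b j - 1)))"
  using assms unfolding kdiff_def ds_def sg_def cnt_def by (cases b) simp

lemma kbasis_down:
  assumes sc: "simplicial_complex m K" and b: "(J, g) \<in> kbasis m K" and "J' \<subseteq> J" "\<forall>i. g' i \<le> g i"
  shows "(J', g') \<in> kbasis m K"
proof -
  have "{i. g' i \<noteq> 0} \<subseteq> {i. g i \<noteq> 0}" using assms(4) by (metis (mono_tags) le_zero_eq mem_Collect_eq subsetI)
  hence "{i. g' i \<noteq> 0} \<in> K" using b sc unfolding kbasis_def simplicial_complex_def by blast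
  moreover have "\<forall>i. i \<notin> {1..m} \<longrightarrow> g' i = 0" using b assms(4) unfolding kbasis_def by (metis (mono_tags, lifting) case_prod_conv le_zero_eq mem_Collect_eq)
  ultimately show ?thesis using b assms(3) unfolding kbasis_def by auto
qed

lemma kbasis_step:
  assumes sc: "simplicial_complex m K" and b: "(J, g) \<in> kbasis m K" and "j \<in> {1..m}"
  shows "(insert j J, g(j := g j - 1)) \<in> kbasis m K"
proof -
  have "{i. (g(j := g j - 1)) i \<noteq> 0} \<subseteq> {i. g i \<noteq> 0}" by auto
  hence "{i. (g(j := g j - 1)) i \<noteq> 0} \<in> K" using b sc unfolding kbasis_def simplicial_complex_def by blast
  thus ?thesis using b assms(3) unfolding kbasis_def by auto
qed



lemma dec_iff: "((A,a),(B,c)) \<in> dec (J,g) \<longleftrightarrow> A \<inter> B = {} \<and> A \<union> B = J \<and> (\<forall>i. a i + c i = g i)"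
  unfolding dec_def by (auto simp: fun_eq_iff)

definition G1 :: "'k::comm_ring_1 kel \<Rightarrow> 'k kel \<Rightarrow> _ \<Rightarrow> nat \<Rightarrow> 'k" where
  "G1 x y p j = ext_sign (fst (fst p)) (fst (snd p)) * (sg (fst (fst p)) j * x (insert j (fst (fst p)), (snd (fst p))(j := snd (fst p) j - 1))) * y (snd p)"
definition G2 :: "'k::comm_ring_1 kel \<Rightarrow> 'k kel \<Rightarrow> _ \<Rightarrow> nat \<Rightarrow> 'k" where
  "G2 x y p j = ext_sign (fst (fst p)) (fst (snd p)) * ((-1)^card (fst (fst p)) * x (fst p)) * (sg (fst (snd p)) j * y (insert j (fst (snd p)), (snd (snd p))(j := snd (snd p) j - 1)))"

lemma cancel_b:
  assumes fJ: "finite J"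
  shows "(\<Sum>p\<in>{p\<in>dec (J,g). j \<in> ds m (fst p) \<and> j \<in> fst (snd p)}. G1 x y p j)
       + (\<Sum>p\<in>{p\<in>dec (J,g). j \<in> ds m (snd p) \<and> j \<in> fst (fst p)}. G2 x y p j) = (0::'k::comm_ring_1)"
proof -
  let ?chi = "\<lambda>((A::nat set,a::nat\<Rightarrow>nat),(B::nat set,c::nat\<Rightarrow>nat)). ((insert j A, a(j := a j - 1)), (B - {j}, c(j := c j + 1)))"
  let ?chi' = "\<lambda>((A::nat set,a::nat\<Rightarrow>nat),(B::nat set,c::nat\<Rightarrow>nat)). ((A - {j}, a(j := a j + 1)), (insert j B, c(j := c j - 1)))"
  have "(\<Sum>p\<in>{p\<in>dec (J,g). j \<in> ds m (fst p) \<and> j \<in> fst (snd p)}. - G1 x y p j)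
       = (\<Sum>p\<in>{p\<in>dec (J,g). j \<in> ds m (snd p) \<and> j \<in> fst (fst p)}. G2 x y p j)"
  proof (rule sum.reindex_bij_witness[where i = ?chi' and j = ?chi])
    fix p assume "p \<in> {p\<in>dec (J,g). j \<in> ds m (fst p) \<and> j \<in> fst (snd p)}"
    then obtain A a B c where pe: "p = ((A,a),(B,c))" and h: "A \<inter> B = {}" "A \<union> B = J" "\<forall>i. a i + c i = g i"
      "j \<in> {1..m}" "j \<notin> A" "1 \<le> a j" "j \<in> B"
      by (cases p) (auto simp: dec_iff ds_def)
    have gj: "1 \<le> g j" "a j + c j = g j" using h(3,6) by (metis le_add1 order_trans)+
    show "?chi' (?chi p) = p" using h gj unfolding pe by auto
    show "?chi p \<in> {p\<in>dec (J,g). j \<in> ds m (snd p) \<and> j \<in> fst (fst p)}"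
      using h unfolding pe apply (auto simp: dec_iff ds_def) using gj(1) by simp
    have fA: "finite A" "finite (B - {j})" using h fJ by auto
    have s: "(ext_sign A (insert j (B - {j})) :: 'k) * sg A j = - (ext_sign (insert j A) (B - {j}) * (-1) ^ card (insert j A) * sg (B - {j}) j)"
      by (rule sign3) (use fA h in auto)
    have ins: "insert j (B - {j}) = B" using h by auto
    have s2: "sg (B - {j}) j * ((-1) ^ card (insert j A) * ext_sign (insert j A) (B - {j})) = - (ext_sign A B * sg A j :: 'k)"
      using s unfolding ins by (simp add: mult_ac)
    let ?X = "x (insert j A, a(j := a j - 1)) * y (B, c)"
    have "G2 x y (?chi p) j = (sg (B - {j}) j * ((-1) ^ card (insert j A) * ext_sign (insert j A) (B - {j}))) * ?X"
      unfolding pe G2_def using h(7) by (simp add: insert_absorb algebra_simps)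
    also have "\<dots> = - (ext_sign A B * sg A j) * ?X" unfolding s2 ..
    also have "\<dots> = - G1 x y p j" unfolding pe G1_def by (simp add: algebra_simps)
    finally show "G2 x y (?chi p) j = - G1 x y p j" .
  next
    fix p assume "p \<in> {p\<in>dec (J,g). j \<in> ds m (snd p) \<and> j \<in> fst (fst p)}"
    then obtain A a B c where pe: "p = ((A,a),(B,c))" and h: "A \<inter> B = {}" "A \<union> B = J" "\<forall>i. a i + c i = g i"
      "j \<in> {1..m}" "j \<notin> B" "1 \<le> c j" "j \<in> A"
      by (cases p) (auto simp: dec_iff ds_def)
    have gj: "1 \<le> g j" using h(3,6) by (metis le_add2 order_trans)
    show "?chi (?chi' p) = p" using h unfolding pe by auto
    show "?chi' p \<in> {p\<in>dec (J,g). j \<in> ds m (fst p) \<and> j \<in> fst (snd p)}"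
      using h unfolding pe apply (auto simp: dec_iff ds_def) using gj by simp
  qed
  hence "(\<Sum>p\<in>{p\<in>dec (J,g). j \<in> ds m (snd p) \<and> j \<in> fst (fst p)}. G2 x y p j) = - (\<Sum>p\<in>{p\<in>dec (J,g). j \<in> ds m (fst p) \<and> j \<in> fst (snd p)}. G1 x y p j)"
    by (simp add: sum_negf)
  thus ?thesis by simp
qed



lemma match_a1:
  assumes fJ: "finite J" and jd: "j \<in> ds m (J,g)"
  shows "(\<Sum>p\<in>{p\<in>dec (insert j J, g(j:=g j - 1)). j \<in> fst (fst p)}. sg J j * tm x y p)
       = (\<Sum>p\<in>{p\<in>dec (J,g). j \<in> ds m (fst p) \<and> j \<notin> fst (snd p)}. (G1 x y p j :: 'k::comm_ring_1))"
proof -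
  have jJ: "j \<notin> J" "1 \<le> g j" "j \<in> {1..m}" using jd by (auto simp: ds_def)
  let ?phi = "\<lambda>((A::nat set,a::nat\<Rightarrow>nat),(B::nat set,c::nat\<Rightarrow>nat)). ((A - {j}, a(j := a j + 1)), (B, c))"
  let ?psi = "\<lambda>((A::nat set,a::nat\<Rightarrow>nat),(B::nat set,c::nat\<Rightarrow>nat)). ((insert j A, a(j := a j - 1)), (B, c))"
  show ?thesis
  proof (rule sum.reindex_bij_witness[where i = ?psi and j = ?phi])
    fix p assume "p \<in> {p\<in>dec (insert j J, g(j:=g j - 1)). j \<in> fst (fst p)}"
    then obtain A a B c where pe: "p = ((A,a),(B,c))" and h: "A \<inter> B = {}" "A \<union> B = insert j J"
      "\<forall>i. a i + c i = (g(j:=g j - 1)) i" "j \<in> A"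
      by (cases p) (auto simp: dec_iff)
    have hj: "a j + c j = g j - 1" using h(3) by (metis fun_upd_same)
    show "?psi (?phi p) = p" using h unfolding pe by (auto simp: insert_absorb)
    show "?phi p \<in> {p\<in>dec (J,g). j \<in> ds m (fst p) \<and> j \<notin> fst (snd p)}"
      using h jJ unfolding pe by (auto simp: dec_iff ds_def)
    have fA: "finite (A - {j})" "finite B" using h fJ by (metis finite_Diff finite_Un finite_insert)+
    have s: "(sg ((A - {j}) \<union> B) j :: 'k) * ext_sign (insert j (A - {j})) B = ext_sign (A - {j}) B * sg (A - {j}) j"
      by (rule sign1) (use fA h in auto)
    have e1: "(A - {j}) \<union> B = J" "insert j (A - {j}) = A" using h jJ by auto
    have s': "(sg J j :: 'k) * ext_sign A B = ext_sign (A - {j}) B * sg (A - {j}) j" using s unfolding e1 .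
    have "G1 x y (?phi p) j = (ext_sign (A - {j}) B * sg (A - {j}) j) * (x (A,a) * y (B,c))"
      unfolding pe G1_def using h(4) by (simp add: insert_absorb algebra_simps)
    also have "\<dots> = (sg J j * ext_sign A B) * (x (A,a) * y (B,c))" unfolding s' ..
    also have "\<dots> = sg J j * tm x y p" unfolding pe tm_def by (simp add: algebra_simps)
    finally show "G1 x y (?phi p) j = sg J j * tm x y p" .
  next
    fix p assume "p \<in> {p\<in>dec (J,g). j \<in> ds m (fst p) \<and> j \<notin> fst (snd p)}"
    then obtain A a B c where pe: "p = ((A,a),(B,c))" and h: "A \<inter> B = {}" "A \<union> B = J"
      "\<forall>i. a i + c i = g i" "j \<notin> A" "1 \<le> a j" "j \<notin> B"
      by (cases p) (auto simp: dec_iff ds_def)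
    have hj: "a j + c j = g j" using h(3) by metis
    show "?phi (?psi p) = p" using h unfolding pe by auto
    show "?psi p \<in> {p\<in>dec (insert j J, g(j:=g j - 1)). j \<in> fst (fst p)}"
      using h unfolding pe by (auto simp: dec_iff)
  qed
qed

lemma match_a2:
  assumes fJ: "finite J" and jd: "j \<in> ds m (J,g)"
  shows "(\<Sum>p\<in>{p\<in>dec (insert j J, g(j:=g j - 1)). j \<in> fst (snd p)}. sg J j * tm x y p)
       = (\<Sum>p\<in>{p\<in>dec (J,g). j \<in> ds m (snd p) \<and> j \<notin> fst (fst p)}. (G2 x y p j :: 'k::comm_ring_1))"
proof -
  have jJ: "j \<notin> J" "1 \<le> g j" "j \<in> {1..m}" using jd by (auto simp: ds_def)
  let ?phi = "\<lambda>((A::nat set,a::nat\<Rightarrow>nat),(B::nat set,c::nat\<Rightarrow>nat)). ((A, a), (B - {j}, c(j := c j + 1)))"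
  let ?psi = "\<lambda>((A::nat set,a::nat\<Rightarrow>nat),(B::nat set,c::nat\<Rightarrow>nat)). ((A, a), (insert j B, c(j := c j - 1)))"
  show ?thesis
  proof (rule sum.reindex_bij_witness[where i = ?psi and j = ?phi])
    fix p assume "p \<in> {p\<in>dec (insert j J, g(j:=g j - 1)). j \<in> fst (snd p)}"
    then obtain A a B c where pe: "p = ((A,a),(B,c))" and h: "A \<inter> B = {}" "A \<union> B = insert j J"
      "\<forall>i. a i + c i = (g(j:=g j - 1)) i" "j \<in> B"
      by (cases p) (auto simp: dec_iff)
    have hj: "a j + c j = g j - 1" using h(3) by (metis fun_upd_same)
    show "?psi (?phi p) = p" using h unfolding pe by (auto simp: insert_absorb)
    show "?phi p \<in> {p\<in>dec (J,g). j \<in> ds m (snd p) \<and> j \<notin> fst (fst p)}"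
      using h jJ unfolding pe by (auto simp: dec_iff ds_def)
    have fA: "finite A" "finite (B - {j})" using h fJ by (metis finite_Diff finite_Un finite_insert)+
    have s: "(sg (A \<union> (B - {j})) j :: 'k) * ext_sign A (insert j (B - {j})) = ext_sign A (B - {j}) * (-1) ^ card A * sg (B - {j}) j"
      by (rule sign2) (use fA h in auto)
    have e1: "A \<union> (B - {j}) = J" "insert j (B - {j}) = B" using h jJ by auto
    have s': "(sg J j :: 'k) * ext_sign A B = ext_sign A (B - {j}) * (-1) ^ card A * sg (B - {j}) j" using s unfolding e1 .
    have "G2 x y (?phi p) j = (ext_sign A (B - {j}) * (-1) ^ card A * sg (B - {j}) j) * (x (A,a) * y (B,c))"
      unfolding pe G2_def using h(4) by (simp add: insert_absorb algebra_simps)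
    also have "\<dots> = (sg J j * ext_sign A B) * (x (A,a) * y (B,c))" unfolding s' ..
    also have "\<dots> = sg J j * tm x y p" unfolding pe tm_def by (simp add: algebra_simps)
    finally show "G2 x y (?phi p) j = sg J j * tm x y p" .
  next
    fix p assume "p \<in> {p\<in>dec (J,g). j \<in> ds m (snd p) \<and> j \<notin> fst (fst p)}"
    then obtain A a B c where pe: "p = ((A,a),(B,c))" and h: "A \<inter> B = {}" "A \<union> B = J"
      "\<forall>i. a i + c i = g i" "j \<notin> B" "1 \<le> c j" "j \<notin> A"
      by (cases p) (auto simp: dec_iff ds_def)
    have hj: "a j + c j = g j" using h(3) by metis
    show "?phi (?psi p) = p" using h unfolding pe by auto
    show "?psi p \<in> {p\<in>dec (insert j J, g(j:=g j - 1)). j \<in> fst (snd p)}"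
      using h unfolding pe by (auto simp: dec_iff)
  qed
qed



lemma perj:
  assumes fJ: "finite J" and fg: "\<forall>i. i \<notin> {1..m} \<longrightarrow> g i = 0" and jm: "j \<in> {1..m}"
  shows "(if j \<in> ds m (J,g) then (\<Sum>p\<in>dec (insert j J, g(j:=g j - 1)). sg J j * tm x y p) else 0)
    = (\<Sum>p\<in>{p\<in>dec (J,g). j \<in> ds m (fst p)}. G1 x y p j) + (\<Sum>p\<in>{p\<in>dec (J,g). j \<in> ds m (snd p)}. (G2 x y p j :: 'k::comm_ring_1))"
proof -
  have fd: "finite (dec (J,g))" by (rule finite_dec[OF fJ fg])
  have r1: "{p\<in>dec (J,g). j \<in> ds m (fst p)} = {p\<in>dec (J,g). j \<in> ds m (fst p) \<and> j \<notin> fst (snd p)} \<union> {p\<in>dec (J,g). j \<in> ds m (fst p) \<and> j \<in> fst (snd p)}" by auto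
  have r2: "{p\<in>dec (J,g). j \<in> ds m (snd p)} = {p\<in>dec (J,g). j \<in> ds m (snd p) \<and> j \<notin> fst (fst p)} \<union> {p\<in>dec (J,g). j \<in> ds m (snd p) \<and> j \<in> fst (fst p)}" by auto
  have S1: "(\<Sum>p\<in>{p\<in>dec (J,g). j \<in> ds m (fst p)}. G1 x y p j) = (\<Sum>p\<in>{p\<in>dec (J,g). j \<in> ds m (fst p) \<and> j \<notin> fst (snd p)}. G1 x y p j) + (\<Sum>p\<in>{p\<in>dec (J,g). j \<in> ds m (fst p) \<and> j \<in> fst (snd p)}. G1 x y p j)"
    unfolding r1 by (rule sum.union_disjoint) (use fd in auto)
  have S2: "(\<Sum>p\<in>{p\<in>dec (J,g). j \<in> ds m (snd p)}. G2 x y p j) = (\<Sum>p\<in>{p\<in>dec (J,g). j \<in> ds m (snd p) \<and> j \<notin> fst (fst p)}. G2 x y p j) + (\<Sum>p\<in>{p\<in>dec (J,g). j \<in> ds m (snd p) \<and> j \<in> fst (fst p)}. G2 x y p j)"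
    unfolding r2 by (rule sum.union_disjoint) (use fd in auto)
  have RHS: "(\<Sum>p\<in>{p\<in>dec (J,g). j \<in> ds m (fst p)}. G1 x y p j) + (\<Sum>p\<in>{p\<in>dec (J,g). j \<in> ds m (snd p)}. (G2 x y p j :: 'k))
     = (\<Sum>p\<in>{p\<in>dec (J,g). j \<in> ds m (fst p) \<and> j \<notin> fst (snd p)}. G1 x y p j) + (\<Sum>p\<in>{p\<in>dec (J,g). j \<in> ds m (snd p) \<and> j \<notin> fst (fst p)}. G2 x y p j)"
    using cancel_b[OF fJ, where g=g and j=j and m=m and x=x and y=y] unfolding S1 S2 by (simp add: algebra_simps)
  show ?thesis
  proof (cases "j \<in> ds m (J,g)")
    case True
    have jJ: "j \<notin> J" using True by (auto simp: ds_def)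
    have fd2: "finite (dec (insert j J, g(j:=g j - 1)))" by (rule finite_dec) (use fJ fg jm in auto)
    have l: "dec (insert j J, g(j:=g j - 1)) = {p\<in>dec (insert j J, g(j:=g j - 1)). j \<in> fst (fst p)} \<union> {p\<in>dec (insert j J, g(j:=g j - 1)). j \<in> fst (snd p)}"
      by (auto simp: dec_def)
    have "(\<Sum>p\<in>dec (insert j J, g(j:=g j - 1)). sg J j * tm x y p) = (\<Sum>p\<in>{p\<in>dec (insert j J, g(j:=g j - 1)). j \<in> fst (fst p)}. sg J j * tm x y p) + (\<Sum>p\<in>{p\<in>dec (insert j J, g(j:=g j - 1)). j \<in> fst (snd p)}. sg J j * tm x y p)"
      by (subst l, rule sum.union_disjoint) (use fd2 in \<open>auto simp: dec_def\<close>)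
    thus ?thesis using True RHS match_a1[OF fJ True, of x y] match_a2[OF fJ True, of x y] by simp
  next
    case False
    have e1: "{p\<in>dec (J,g). j \<in> ds m (fst p) \<and> j \<notin> fst (snd p)} = {}"
    proof (rule ccontr)
      assume "\<not> ?thesis"
      then obtain A a B c where "((A,a),(B,c)) \<in> dec (J,g)" "j \<in> ds m (A,a)" "j \<notin> B" by auto
      thus False using False unfolding dec_iff ds_def by (auto, metis le_add1 order_trans)
    qed
    have e2: "{p\<in>dec (J,g). j \<in> ds m (snd p) \<and> j \<notin> fst (fst p)} = {}"
    proof (rule ccontr)
      assume "\<not> ?thesis"
      then obtain A a B c where "((A,a),(B,c)) \<in> dec (J,g)" "j \<in> ds m (B,c)" "j \<notin> A" by auto
      thus False using False unfolding dec_iff ds_def by (auto, metis le_add2 order_trans)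
    qed
    show ?thesis using False RHS unfolding e1 e2 by simp
  qed
qed

definition par :: "'k::comm_ring_1 kel \<Rightarrow> 'k kel" where "par x = (\<lambda>b. (-1) ^ card (fst b) * x b)"

lemma leibniz:
  assumes sc: "simplicial_complex m K"
  shows "kdiff m K (kmult m K x y) b = kmult m K (kdiff m K x) y b + kmult m K (par x) (kdiff m K y) (b :: nat set \<times> (nat \<Rightarrow> nat))"
proof (cases "b \<in> kbasis m K")
  case False
  thus ?thesis by (cases b) (simp add: kdiff_def kmult_def)
next
  case True
  obtain J g where be: "b = (J,g)" by fastforce
  have kb: "(J,g) \<in> kbasis m K" using True be by simp
  have fJ: "finite J" and fg: "\<forall>i. i \<notin> {1..m} \<longrightarrow> g i = 0" using kbasis_D[OF kb] finite_subset by auto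
  have fd: "finite (dec (J,g))" by (rule finite_dec[OF fJ fg])
  have dsub: "ds m (J,g) \<subseteq> {1..m}" by (auto simp: ds_def)
  have dsi: "{1..m} \<inter> ds m (J,g) = ds m (J,g)" using dsub by blast
  have "kdiff m K (kmult m K x y) b = (\<Sum>j\<in>ds m (J,g). sg J j * kmult m K x y (insert j J, g(j := g j - 1)))"
    unfolding be by (simp add: diff_eq[OF kb])
  also have "\<dots> = (\<Sum>j\<in>ds m (J,g). sg J j * (\<Sum>p\<in>dec (insert j J, g(j:=g j - 1)). tm x y p))"
    by (rule sum.cong[OF refl], subst mult_eq[OF kbasis_step[OF sc kb]]) (auto simp: ds_def)
  also have "\<dots> = (\<Sum>j\<in>{1..m}. if j \<in> ds m (J,g) then (\<Sum>p\<in>dec (insert j J, g(j:=g j - 1)). sg J j * tm x y p) else 0)"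
    apply (subst sum.inter_restrict[symmetric], simp) unfolding dsi by (simp add: sum_distrib_left)
  also have "\<dots> = (\<Sum>j\<in>{1..m}. (\<Sum>p\<in>{p\<in>dec (J,g). j \<in> ds m (fst p)}. G1 x y p j) + (\<Sum>p\<in>{p\<in>dec (J,g). j \<in> ds m (snd p)}. G2 x y p j))"
    by (rule sum.cong) (auto simp: perj[OF fJ fg])
  also have "\<dots> = (\<Sum>j\<in>{1..m}. \<Sum>p\<in>{p\<in>dec (J,g). j \<in> ds m (fst p)}. G1 x y p j) + (\<Sum>j\<in>{1..m}. \<Sum>p\<in>{p\<in>dec (J,g). j \<in> ds m (snd p)}. G2 x y p j)"
    by (rule sum.distrib)
  also have "(\<Sum>j\<in>{1..m}. \<Sum>p\<in>{p\<in>dec (J,g). j \<in> ds m (fst p)}. G1 x y p j) = (\<Sum>p\<in>dec (J,g). \<Sum>j\<in>ds m (fst p). G1 x y p j)"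
  proof -
    have "(\<Sum>p\<in>dec (J,g). \<Sum>j\<in>ds m (fst p). G1 x y p j) = (\<Sum>j\<in>{1..m}. \<Sum>p\<in>{p. p\<in>dec (J,g) \<and> (j \<notin> fst (fst p) \<and> 1 \<le> snd (fst p) j)}. G1 x y p j)"
      unfolding ds_def by (rule sum.swap_restrict[OF fd finite_atLeastAtMost])
    also have "\<dots> = (\<Sum>j\<in>{1..m}. \<Sum>p\<in>{p\<in>dec (J,g). j \<in> ds m (fst p)}. G1 x y p j)"
      by (rule sum.cong[OF refl], rule sum.cong) (auto simp: ds_def)
    finally show ?thesis by (rule sym)
  qed
  also have "\<dots> = kmult m K (kdiff m K x) y b"
    unfolding be mult_eq[OF kb]
  proof (rule sum.cong[OF refl])
    fix p assume p: "p \<in> dec (J,g)"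
    have kb1: "fst p \<in> kbasis m K"
    proof -
      obtain A a B c where pe: "p = ((A,a),(B,c))" by (metis prod.collapse)
      have h: "A \<inter> B = {}" "A \<union> B = J" "\<forall>i. a i + c i = g i" using p unfolding pe dec_iff by auto
      have le: "\<forall>i. a i \<le> g i" "\<forall>i. c i \<le> g i" using h(3) by (metis le_add1, metis le_add2)
      have "(A,a) \<in> kbasis m K" by (rule kbasis_down[OF sc kb]) (use h le in auto)
      thus ?thesis unfolding pe by simp
    qed
    show "(\<Sum>j\<in>ds m (fst p). G1 x y p j) = tm (kdiff m K x) y p"
      unfolding tm_def diff_eq[OF kb1] G1_def by (simp add: sum_distrib_left sum_distrib_right)
  qed
  also have "(\<Sum>j\<in>{1..m}. \<Sum>p\<in>{p\<in>dec (J,g). j \<in> ds m (snd p)}. G2 x y p j) = (\<Sum>p\<in>dec (J,g). \<Sum>j\<in>ds m (snd p). G2 x y p j)"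
  proof -
    have "(\<Sum>p\<in>dec (J,g). \<Sum>j\<in>ds m (snd p). G2 x y p j) = (\<Sum>j\<in>{1..m}. \<Sum>p\<in>{p. p\<in>dec (J,g) \<and> (j \<notin> fst (snd p) \<and> 1 \<le> snd (snd p) j)}. G2 x y p j)"
      unfolding ds_def by (rule sum.swap_restrict[OF fd finite_atLeastAtMost])
    also have "\<dots> = (\<Sum>j\<in>{1..m}. \<Sum>p\<in>{p\<in>dec (J,g). j \<in> ds m (snd p)}. G2 x y p j)"
      by (rule sum.cong[OF refl], rule sum.cong) (auto simp: ds_def)
    finally show ?thesis by (rule sym)
  qed
  also have "\<dots> = kmult m K (par x) (kdiff m K y) b"
    unfolding be mult_eq[OF kb]
  proof (rule sum.cong[OF refl])
    fix p assume p: "p \<in> dec (J,g)"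
    have kb2: "snd p \<in> kbasis m K"
    proof -
      obtain A a B c where pe: "p = ((A,a),(B,c))" by (metis prod.collapse)
      have h: "A \<inter> B = {}" "A \<union> B = J" "\<forall>i. a i + c i = g i" using p unfolding pe dec_iff by auto
      have le: "\<forall>i. a i \<le> g i" "\<forall>i. c i \<le> g i" using h(3) by (metis le_add1, metis le_add2)
      have "(B,c) \<in> kbasis m K" by (rule kbasis_down[OF sc kb]) (use h le in auto)
      thus ?thesis unfolding pe by simp
    qed
    show "(\<Sum>j\<in>ds m (snd p). G2 x y p j) = tm (par x) (kdiff m K y) p"
      unfolding tm_def diff_eq[OF kb2] G2_def par_def by (simp add: sum_distrib_left sum_distrib_right)
  qed
  finally show ?thesis .
qed



lemma sum_invol:
  fixes f :: "'a \<Rightarrow> 'b::ab_group_add"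
  assumes "finite T" "\<forall>t\<in>T. \<iota> t \<in> T \<and> \<iota> (\<iota> t) = t \<and> \<iota> t \<noteq> t \<and> f (\<iota> t) = - f t"
  shows "sum f T = 0"
  using assms
proof (induction "card T" arbitrary: T rule: less_induct)
  case less
  show ?case
  proof (cases "T = {}")
    case True thus ?thesis by simp
  next
    case False
    then obtain t where t: "t \<in> T" by blast
    let ?T = "T - {t, \<iota> t}"
    have it: "\<iota> t \<in> T" "\<iota> t \<noteq> t" "f (\<iota> t) = - f t" using less.prems t by auto
    have lt: "card ?T < card T" by (rule psubset_card_mono) (use less.prems(1) t in auto)
    have itt: "\<iota> (\<iota> t) = t" using less.prems t by auto
    have inv: "\<forall>s\<in>?T. \<iota> s \<in> ?T \<and> \<iota> (\<iota> s) = s \<and> \<iota> s \<noteq> s \<and> f (\<iota> s) = - f s"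
    proof
      fix s assume s: "s \<in> ?T"
      have p: "\<iota> s \<in> T" "\<iota> (\<iota> s) = s" "\<iota> s \<noteq> s" "f (\<iota> s) = - f s" using less.prems(2) s by auto
      have a: "\<iota> s \<noteq> t"
      proof
        assume "\<iota> s = t" hence "\<iota> t = s" using p(2) by metis
        thus False using s by blast
      qed
      have b: "\<iota> s \<noteq> \<iota> t"
      proof
        assume "\<iota> s = \<iota> t" hence "s = t" using p(2) itt by metis
        thus False using s by blast
      qed
      show "\<iota> s \<in> ?T \<and> \<iota> (\<iota> s) = s \<and> \<iota> s \<noteq> s \<and> f (\<iota> s) = - f s" using p a b by blast
    qed
    have fin: "finite ?T" using less.prems(1) by blast
    have z: "sum f ?T = 0" by (rule less.hyps[OF lt fin inv])
    have "sum f T = sum f {t, \<iota> t} + sum f ?T"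
      using sum.subset_diff[of "{t, \<iota> t}" T f] less.prems(1) t it by (simp add: add.commute)
    also have "\<dots> = 0" using z it by simp
    finally show ?thesis .
  qed
qed

lemma cnt_insert: "finite J \<Longrightarrow> j \<notin> J \<Longrightarrow> cnt (insert j J) k = cnt J k + (if j < k then 1 else 0)"
proof -
  assume f: "finite J" "j \<notin> J"
  have "{l \<in> insert j J. l < k} = (if j < k then insert j {l\<in>J. l < k} else {l\<in>J. l < k})" by auto
  thus ?thesis unfolding cnt_def using f by simp
qed

lemma sg_swap:
  assumes "finite J" "j \<notin> J" "k \<notin> J" "j \<noteq> k"
  shows "(sg J j :: 'k::comm_ring_1) * sg (insert j J) k = - (sg J k * sg (insert k J) j)"
  using assms unfolding sg_def
  by (cases "j < k") (auto simp: cnt_insert power_add)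

lemma dd:
  assumes sc: "simplicial_complex m K"
  shows "kdiff m K (kdiff m K (x :: 'k::comm_ring_1 kel)) b = 0"
proof (cases "b \<in> kbasis m K")
  case False
  thus ?thesis by (cases b) (simp add: kdiff_def)
next
  case True
  obtain J g where be: "b = (J,g)" by fastforce
  have kb: "(J,g) \<in> kbasis m K" using True be by simp
  have fJ: "finite J" using kbasis_D[OF kb] finite_subset by auto
  let ?g = "\<lambda>j k. sg J j * sg (insert j J) k * x (insert k (insert j J), g(j := g j - 1, k := g k - 1))"
  let ?f = "case_prod ?g"
  let ?T = "Sigma (ds m (J,g)) (\<lambda>j. ds m (insert j J, g(j := g j - 1)))"
  have "kdiff m K (kdiff m K x) b = (\<Sum>j\<in>ds m (J,g). sg J j * kdiff m K x (insert j J, g(j := g j - 1)))"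
    unfolding be by (simp add: diff_eq[OF kb])
  also have "\<dots> = (\<Sum>j\<in>ds m (J,g). \<Sum>k\<in>ds m (insert j J, g(j := g j - 1)). ?g j k)"
  proof (rule sum.cong[OF refl])
    fix j assume j: "j \<in> ds m (J,g)"
    have kb2: "(insert j J, g(j := g j - 1)) \<in> kbasis m K" using kbasis_step[OF sc kb] j by (auto simp: ds_def)
    show "sg J j * kdiff m K x (insert j J, g(j := g j - 1)) = (\<Sum>k\<in>ds m (insert j J, g(j := g j - 1)). ?g j k)"
      unfolding diff_eq[OF kb2] sum_distrib_left
      by (rule sum.cong[OF refl]) (auto simp: ds_def mult.assoc)
  qed
  also have "\<dots> = sum ?f ?T" by (rule sum.Sigma) (auto simp: ds_def simp del: fun_upd_apply)
  also have "\<dots> = 0"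
  proof (rule sum_invol[where \<iota> = "\<lambda>(j,k). (k,j)"])
    show "finite ?T" by (rule finite_SigmaI) (auto simp: ds_def)
    show "\<forall>t\<in>?T. (case t of (j,k) \<Rightarrow> (k,j)) \<in> ?T \<and> (case (case t of (j,k) \<Rightarrow> (k,j)) of (j,k) \<Rightarrow> (k,j)) = t \<and> (case t of (j,k) \<Rightarrow> (k,j)) \<noteq> t \<and> ?f (case t of (j,k) \<Rightarrow> (k,j)) = - ?f t"
    proof
      fix t assume t: "t \<in> ?T"
      obtain j k where te: "t = (j,k)" by fastforce
      have h: "j \<in> {1..m}" "k \<in> {1..m}" "j \<notin> J" "k \<notin> J" "j \<noteq> k" "1 \<le> g j" "1 \<le> g k"
        using t unfolding te by (auto simp: ds_def)
      have s: "(sg J k :: 'k) * sg (insert k J) j = - (sg J j * sg (insert j J) k)"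
        using sg_swap[OF fJ h(4,3)] h(5) by auto
      have e: "insert j (insert k J) = insert k (insert j J)" "g(k := g k - 1, j := g j - 1) = g(j := g j - 1, k := g k - 1)"
        using h(5) by (auto simp: fun_upd_twist)
      show "(case t of (j,k) \<Rightarrow> (k,j)) \<in> ?T \<and> (case (case t of (j,k) \<Rightarrow> (k,j)) of (j,k) \<Rightarrow> (k,j)) = t \<and> (case t of (j,k) \<Rightarrow> (k,j)) \<noteq> t \<and> ?f (case t of (j,k) \<Rightarrow> (k,j)) = - ?f t"
        unfolding te using h s e by (auto simp: ds_def)
    qed
  qed
  finally show ?thesis .
qed



lemma kdiff_add: "kdiff m K (\<lambda>b. u b + v b) b = kdiff m K u b + kdiff m K v b"
  by (cases b) (simp add: kdiff_def sum.distrib algebra_simps)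
lemma kdiff_zero: "kdiff m K (\<lambda>b. 0::'k::comm_ring_1) b = 0"
  by (cases b) (simp add: kdiff_def)
lemma kdiff_neg: "kdiff m K (\<lambda>b. - u b) b = - kdiff m K (u::'k::comm_ring_1 kel) b"
  by (cases b) (simp add: kdiff_def sum_negf)

lemma mult_add1: "kmult m K (\<lambda>b. u b + v b) y b = kmult m K u y b + kmult m K v y (b::nat set \<times> (nat \<Rightarrow> nat))"
proof (cases "b \<in> kbasis m K")
  case True thus ?thesis unfolding mult_eq[OF True] tm_def by (simp add: sum.distrib algebra_simps)
next
  case False thus ?thesis by (cases b) (simp add: kmult_def)
qed
lemma mult_add2: "kmult m K y (\<lambda>b. u b + v b) b = kmult m K y u b + kmult m K y v (b::nat set \<times> (nat \<Rightarrow> nat))"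
proof (cases "b \<in> kbasis m K")
  case True thus ?thesis unfolding mult_eq[OF True] tm_def by (simp add: sum.distrib algebra_simps)
next
  case False thus ?thesis by (cases b) (simp add: kmult_def)
qed
lemma mult_zero1: "kmult m K (\<lambda>b. 0) (y::'k::comm_ring_1 kel) b = 0"
proof (cases "b \<in> kbasis m K")
  case True thus ?thesis unfolding mult_eq[OF True] tm_def by simp
next
  case False thus ?thesis by (cases b) (simp add: kmult_def)
qed
lemma mult_zero2: "kmult m K (y::'k::comm_ring_1 kel) (\<lambda>b. 0) b = 0"
proof (cases "b \<in> kbasis m K")
  case True thus ?thesis unfolding mult_eq[OF True] tm_def by simp
next
  case False thus ?thesis by (cases b) (simp add: kmult_def)
qed

lemma kbar_kdiff: "kbar (kdiff m K y) b = kdiff m K (par (y::'k::comm_ring_1 kel)) b"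
proof (cases "b \<in> kbasis m K")
  case True
  obtain J g where be: "b = (J,g)" by fastforce
  have kb: "(J,g) \<in> kbasis m K" using True be by simp
  have fJ: "finite J" using kbasis_D[OF kb] finite_subset by auto
  show ?thesis unfolding be kbar_def using kb fJ
    by (simp add: diff_eq[OF kb] par_def sum_distrib_left ds_def algebra_simps sum_negf)
next
  case False thus ?thesis by (cases b) (simp add: kdiff_def kbar_def)
qed

lemma kbar_par: "kbar x b = par (\<lambda>b. - x b) (b::nat set \<times> (nat \<Rightarrow> nat))"
  by (cases b) (simp add: kbar_def par_def)

lemma par_par: "par (par x) b = (x b :: 'k::comm_ring_1)"
  by (simp add: par_def power_mult_distrib[symmetric])



definition ind :: "nat set \<Rightarrow> nat \<Rightarrow> nat" where "ind X = (\<lambda>i. if i \<in> X then 1 else 0)"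

definition phi :: "nat set \<Rightarrow> nat set \<Rightarrow> 'k::comm_ring_1 kel \<Rightarrow> 'k" where
  "phi I1 I2 x = (\<Sum>q\<in>I1 \<times> I2. ext_sign {fst q} {snd q} * x ({fst q, snd q}, ind (I1 \<union> I2 - {fst q, snd q})))"

lemma ext_sign_single: "(ext_sign {a} {b} :: 'k::comm_ring_1) = (if b < a then -1 else 1)"
proof -
  have "{(x, y). x \<in> {a} \<and> y \<in> {b} \<and> y < x} = (if b < a then {(a,b)} else {})" by auto
  thus ?thesis unfolding ext_sign_def by simp
qed

lemma sg_pair: "a \<noteq> b \<Longrightarrow> (sg {a,b} j :: 'k::comm_ring_1) = (if a < j then -1 else 1) * (if b < j then -1 else 1)"
proof -
  assume ab: "a \<noteq> b"
  have "cnt {b} j = (if b < j then 1 else 0)"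
  proof -
    have "{l \<in> {b}. l < j} = (if b < j then {b} else {})" by auto
    thus ?thesis unfolding cnt_def by simp
  qed
  thus ?thesis using cnt_insert[of "{b}" a j] ab unfolding sg_def by (auto simp: power_add)
qed

lemma ind_kb:
  assumes "X \<subseteq> {1..m}" "U \<subseteq> {1..m}" "X \<in> K"
  shows "(U, ind X) \<in> kbasis m K"
proof -
  have "{i. ind X i \<noteq> 0} = X" by (auto simp: ind_def)
  thus ?thesis using assms unfolding kbasis_def by (auto simp: ind_def)
qed

lemma phi_d:
  assumes sub: "I1 \<subseteq> {1..m}" "I2 \<subseteq> {1..m}" and dj: "I1 \<inter> I2 = {}"
    and hK: "\<forall>a\<in>I1. \<forall>a'\<in>I2. I1 \<union> I2 - {a,a'} \<in> K"
  shows "phi I1 I2 (kdiff m K (w :: 'k::comm_ring_1 kel)) = 0"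
proof -
  let ?S = "I1 \<union> I2"
  have fS: "finite ?S" using sub finite_subset by (meson finite_Un finite_atLeastAtMost)
  let ?G = "\<lambda>q j. ext_sign {fst q} {snd q} * sg {fst q, snd q} j * (w (insert j {fst q, snd q}, ind (?S - insert j {fst q, snd q})) :: 'k)"
  let ?F = "case_prod ?G"
  let ?T = "Sigma (I1 \<times> I2) (\<lambda>q. ?S - {fst q, snd q})"
  have "phi I1 I2 (kdiff m K w) = (\<Sum>q\<in>I1 \<times> I2. \<Sum>j\<in>?S - {fst q, snd q}. ?G q j)"
    unfolding phi_def
  proof (rule sum.cong[OF refl])
    fix q assume q: "q \<in> I1 \<times> I2"
    obtain a a' where qe: "q = (a,a')" by fastforce
    have aa: "a \<in> I1" "a' \<in> I2" using q qe by auto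
    have kb: "({a,a'}, ind (?S - {a,a'})) \<in> kbasis m K"
      by (rule ind_kb) (use sub aa hK in auto)
    have dse: "ds m ({a,a'}, ind (?S - {a,a'})) = ?S - {a,a'}" using sub by (auto simp: ds_def ind_def)
    have upd: "\<And>j. j \<in> ?S - {a,a'} \<Longrightarrow> (ind (?S - {a,a'}))(j := ind (?S - {a,a'}) j - 1) = ind (?S - insert j {a,a'})"
      by (auto simp: ind_def fun_eq_iff)
    show "ext_sign {fst q} {snd q} * kdiff m K w ({fst q, snd q}, ind (?S - {fst q, snd q})) = (\<Sum>j\<in>?S - {fst q, snd q}. ?G q j)"
      unfolding qe fst_conv snd_conv diff_eq[OF kb] dse sum_distrib_left
      apply (rule sum.cong[OF refl])
      apply (subst upd)
      by (simp_all add: mult.assoc)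
  qed
  also have "\<dots> = sum ?F ?T" by (rule sum.Sigma) (use fS sub finite_subset in auto)
  also have "\<dots> = 0"
  proof (rule sum_invol[where \<iota> = "\<lambda>(q,j). if j \<in> I1 then ((j, snd q), fst q) else ((fst q, j), snd q)"])
    show "finite ?T" by (rule finite_SigmaI) (use fS sub finite_subset in auto)
    show "\<forall>t\<in>?T. (case t of (q,j) \<Rightarrow> if j \<in> I1 then ((j, snd q), fst q) else ((fst q, j), snd q)) \<in> ?T \<and>
       (case (case t of (q,j) \<Rightarrow> if j \<in> I1 then ((j, snd q), fst q) else ((fst q, j), snd q)) of (q,j) \<Rightarrow> if j \<in> I1 then ((j, snd q), fst q) else ((fst q, j), snd q)) = t \<and>
       (case t of (q,j) \<Rightarrow> if j \<in> I1 then ((j, snd q), fst q) else ((fst q, j), snd q)) \<noteq> t \<and>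
       ?F (case t of (q,j) \<Rightarrow> if j \<in> I1 then ((j, snd q), fst q) else ((fst q, j), snd q)) = - ?F t"
    proof
      fix t assume t: "t \<in> ?T"
      obtain a a' j where te: "t = ((a,a'),j)" by (metis prod.collapse)
      have h: "a \<in> I1" "a' \<in> I2" "j \<in> ?S" "j \<noteq> a" "j \<noteq> a'" using t te by auto
      have na: "a \<noteq> a'" "a \<notin> I2" "a' \<notin> I1" using h dj by auto
      show "(case t of (q,j) \<Rightarrow> if j \<in> I1 then ((j, snd q), fst q) else ((fst q, j), snd q)) \<in> ?T \<and>
       (case (case t of (q,j) \<Rightarrow> if j \<in> I1 then ((j, snd q), fst q) else ((fst q, j), snd q)) of (q,j) \<Rightarrow> if j \<in> I1 then ((j, snd q), fst q) else ((fst q, j), snd q)) = t \<and>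
       (case t of (q,j) \<Rightarrow> if j \<in> I1 then ((j, snd q), fst q) else ((fst q, j), snd q)) \<noteq> t \<and>
       ?F (case t of (q,j) \<Rightarrow> if j \<in> I1 then ((j, snd q), fst q) else ((fst q, j), snd q)) = - ?F t"
      proof (cases "j \<in> I1")
        case True
        have e: "insert a {j, a'} = insert j {a, a'}" by auto
        have s: "(ext_sign {j} {a'} :: 'k) * sg {j, a'} a = - (ext_sign {a} {a'} * sg {a, a'} j)"
          using h na True dj unfolding ext_sign_single sg_pair[OF h(5)] sg_pair[OF na(1)]
          by (cases "a < j"; cases "a' < a"; cases "a' < j") auto
        have F1: "?F ((j,a'),a) = - ?F ((a,a'),j)" using e s by simp
        have M: "((j,a'),a) \<in> ?T" using h na True by auto
        show ?thesis unfolding te using True h(1,4) F1 M by simp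
      next
        case False
        have jI2: "j \<in> I2" using False h by auto
        have e: "insert a' {a, j} = insert j {a, a'}" by auto
        have ja: "a \<noteq> j" using h by auto
        have s: "(ext_sign {a} {j} :: 'k) * sg {a, j} a' = - (ext_sign {a} {a'} * sg {a, a'} j)"
          using h na jI2 dj unfolding ext_sign_single sg_pair[OF ja] sg_pair[OF na(1)]
          by (cases "a < j"; cases "a' < a"; cases "a' < j") auto
        have F1: "?F ((a,j),a') = - ?F ((a,a'),j)" using e s by simp
        have M: "((a,j),a') \<in> ?T" using h na jI2 by auto
        show ?thesis unfolding te using False h(5) na(3) F1 M by simp
      qed
    qed
  qed
  finally show ?thesis .
qed



definition delta :: "nat set \<times> (nat \<Rightarrow> nat) \<Rightarrow> 'k::comm_ring_1 kel" where
  "delta e = (\<lambda>b. if b = e then 1 else 0)"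

lemma delta_cycle:
  assumes sc: "simplicial_complex m K" and X: "X \<subseteq> {1..m}" "i \<in> X" "X - {i} \<in> K" "X \<notin> K"
  shows "kcycle m K (delta ({i}, ind (X - {i})) :: 'k::comm_ring_1 kel)" (is "kcycle m K ?d")
    and "kpositive m (delta ({i}, ind (X - {i})) :: 'k kel)"
proof -
  let ?e = "({i}, ind (X - {i}))"
  have ekb: "?e \<in> kbasis m K" by (rule ind_kb) (use X in auto)
  have supp: "ksupp ?d \<subseteq> {?e}" unfolding ksupp_def delta_def by auto
  have "kelem m K ?d" unfolding kelem_def using supp ekb finite_subset by auto
  moreover have "kdiff m K ?d = (\<lambda>_. 0)"
  proof
    fix b :: "nat set \<times> (nat \<Rightarrow> nat)"
    show "kdiff m K ?d b = 0"
    proof (cases "b \<in> kbasis m K")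
      case False thus ?thesis by (cases b) (simp add: kdiff_def)
    next
      case True
      obtain J g where be: "b = (J,g)" by fastforce
      have kb: "(J,g) \<in> kbasis m K" using True be by simp
      have z: "?d (insert j J, g(j := g j - 1)) = 0" if j: "j \<in> ds m (J,g)" for j
      proof (rule ccontr)
        assume "?d (insert j J, g(j := g j - 1)) \<noteq> 0"
        hence eq: "insert j J = {i}" "g(j := g j - 1) = ind (X - {i})" unfolding delta_def by (auto split: if_splits)
        have jj: "j \<notin> J" "1 \<le> g j" using j by (auto simp: ds_def)
        have ji: "j = i" "J = {}" using eq(1) jj(1) by auto
        have gk: "g k = (if k \<in> X then 1 else 0)" for k
        proof (cases "k = i")
          case True
          have "g i - 1 = 0" using fun_cong[OF eq(2), of i] ji by (simp add: ind_def)
          thus ?thesis using True jj(2) ji X(2) by simp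
        next
          case False
          thus ?thesis using fun_cong[OF eq(2), of k] ji by (simp add: ind_def)
        qed
        have "{k. g k \<noteq> 0} = X" using gk by auto
        thus False using kbasis_D[OF kb] X(4) by simp
      qed
      show ?thesis unfolding be diff_eq[OF kb] using z by simp
    qed
  qed
  ultimately show "kcycle m K ?d" unfolding kcycle_def by simp
  show "kpositive m (delta ({i}, ind (X - {i})) :: 'k kel)"
    unfolding kpositive_def
    by (rule exI[of _ "kdeg m ?e"]) (use supp in \<open>auto simp: kdeg_def\<close>)
qed

lemma prod_phi:
  assumes sub: "I1 \<subseteq> {1..m}" "I2 \<subseteq> {1..m}" and dj: "I1 \<inter> I2 = {}"
    and hK: "\<forall>a\<in>I1. \<forall>a'\<in>I2. I1 \<union> I2 - {a,a'} \<in> K"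
    and i: "i \<in> I1" "i' \<in> I2"
  shows "phi I1 I2 (kmult m K (kbar (delta ({i}, ind (I1 - {i})))) (delta ({i'}, ind (I2 - {i'})))) = (1::'k::comm_ring_1)"
proof -
  let ?e1 = "({i}, ind (I1 - {i}))" and ?e2 = "({i'}, ind (I2 - {i'}))"
  have kbar1: "kbar (delta ?e1) = (delta ?e1 :: 'k kel)"
  proof
    fix b :: "nat set \<times> (nat \<Rightarrow> nat)"
    obtain J g where be: "b = (J,g)" by fastforce
    show "kbar (delta ?e1) b = delta ?e1 b" unfolding be kbar_def delta_def by auto
  qed
  have tm: "tm (delta ?e1) (delta ?e2) p = (if p = (?e1,?e2) then ext_sign {i} {i'} else (0::'k))" for p
    unfolding tm_def delta_def by (cases p) auto
  have memb: "(?e1, ?e2) \<in> dec ({a,a'}, ind (I1 \<union> I2 - {a,a'})) \<longleftrightarrow> (a,a') = (i,i')" if q: "a \<in> I1" "a' \<in> I2" for a a'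
  proof
    assume "(?e1, ?e2) \<in> dec ({a,a'}, ind (I1 \<union> I2 - {a,a'}))"
    hence "{i} \<union> {i'} = {a,a'}" unfolding dec_iff by blast
    thus "(a,a') = (i,i')" using q i dj by (metis Un_insert_left disjoint_iff doubleton_eq_iff sup_bot_left)
  next
    assume "(a,a') = (i,i')"
    thus "(?e1, ?e2) \<in> dec ({a,a'}, ind (I1 \<union> I2 - {a,a'}))"
      unfolding dec_iff using i dj by (auto simp: ind_def)
  qed
  have "phi I1 I2 (kmult m K (kbar (delta ?e1)) (delta ?e2)) = (\<Sum>q\<in>I1 \<times> I2. if q = (i,i') then ext_sign {i} {i'} * ext_sign {i} {i'} else (0::'k))"
    unfolding phi_def kbar1
  proof (rule sum.cong[OF refl])
    fix q assume q: "q \<in> I1 \<times> I2"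
    obtain a a' where qe: "q = (a,a')" by fastforce
    have aa: "a \<in> I1" "a' \<in> I2" using q qe by auto
    have kb: "({a,a'}, ind (I1 \<union> I2 - {a,a'})) \<in> kbasis m K"
      by (rule ind_kb) (use sub aa hK in auto)
    have fd: "finite (dec ({a,a'}, ind (I1 \<union> I2 - {a,a'})))" by (rule finite_dec_kb[OF kb])
    show "(ext_sign {fst q} {snd q} :: 'k) * kmult m K (delta ?e1) (delta ?e2) ({fst q, snd q}, ind (I1 \<union> I2 - {fst q, snd q})) = (if q = (i,i') then ext_sign {i} {i'} * ext_sign {i} {i'} else 0)"
    proof -
      have "sum (tm (delta ?e1) (delta ?e2)) (dec ({a,a'}, ind (I1 \<union> I2 - {a,a'}))) = (\<Sum>p\<in>dec ({a,a'}, ind (I1 \<union> I2 - {a,a'})). if p = (?e1,?e2) then ext_sign {i} {i'} else (0::'k))"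
        by (rule sum.cong[OF refl]) (rule tm)
      also have "\<dots> = (if (?e1,?e2) \<in> dec ({a,a'}, ind (I1 \<union> I2 - {a,a'})) then ext_sign {i} {i'} else 0)"
        by (rule sum.delta[OF fd])
      finally have v: "kmult m K (delta ?e1) (delta ?e2) ({a,a'}, ind (I1 \<union> I2 - {a,a'})) = (if (a,a') = (i,i') then ext_sign {i} {i'} else (0::'k))"
        unfolding mult_eq[OF kb] memb[OF aa] .
      show ?thesis using v unfolding qe by simp
    qed
  qed
  also have "\<dots> = 1"
  proof -
    have f1: "finite I1" by (rule finite_subset[OF sub(1)]) simp
    have f2: "finite I2" by (rule finite_subset[OF sub(2)]) simp
    have fI: "finite (I1 \<times> I2)" using f1 f2 by simp
    show ?thesis unfolding sum.delta[OF fI] using i by (simp add: ext_sign_single)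
  qed
  finally show ?thesis .
qed



lemma phi_add3: "(\<And>b. M b = P b + Q b + R b) \<Longrightarrow> phi I1 I2 M = phi I1 I2 P + phi I1 I2 Q + phi I1 I2 (R :: 'k::comm_ring_1 kel)"
  unfolding phi_def by (simp add: sum.distrib algebra_simps)

lemma kbar_add: "kbar (\<lambda>b. u b + v b) = (\<lambda>b. kbar u b + kbar v (b::nat set \<times> (nat \<Rightarrow> nat)))"
  by (rule ext) (auto simp: kbar_def algebra_simps split: prod.split)

theorem lemma2p4:
  fixes K :: "nat set set" and m :: nat and I J :: "nat set"
  assumes "simplicial_complex m K"
    and "I \<noteq> {}" and "J \<noteq> {}" and "I \<subseteq> {1..m}" and "J \<subseteq> {1..m}" and "I \<inter> J = {}"
    and "full_subcomplex K (I \<union> J) = sc_join (simplex_boundary I) (simplex_boundary J)"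
    and "(0::'k::comm_ring_1) \<noteq> 1"
  shows "\<not> golod TYPE('k) m K"
proof
  assume gol: "golod TYPE('k) m K"
  note sc = assms(1)
  have fsc: "\<And>s. s \<subseteq> I \<union> J \<Longrightarrow> s \<in> K \<longleftrightarrow> s \<in> sc_join (simplex_boundary I) (simplex_boundary J)"
    using assms(7) unfolding full_subcomplex_def by blast
  obtain i where i: "i \<in> I" using assms(2) by blast
  obtain i' where i': "i' \<in> J" using assms(3) by blast
  have hI: "I - {x} \<in> K" if "x \<in> I" for x
  proof -
    have "I - {x} = (I - {x}) \<union> {}" by simp
    moreover have "I - {x} \<subset> I" "{} \<subset> J" using that assms(3) by auto
    ultimately have "I - {x} \<in> sc_join (simplex_boundary I) (simplex_boundary J)"
      unfolding sc_join_def simplex_boundary_def by blast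
    thus ?thesis using fsc by blast
  qed
  have hJ: "J - {x} \<in> K" if "x \<in> J" for x
  proof -
    have "J - {x} = {} \<union> (J - {x})" by simp
    moreover have "J - {x} \<subset> J" "{} \<subset> I" using that assms(2) by auto
    ultimately have "J - {x} \<in> sc_join (simplex_boundary I) (simplex_boundary J)"
      unfolding sc_join_def simplex_boundary_def by blast
    thus ?thesis using fsc by blast
  qed
  have nI: "I \<notin> K"
  proof
    assume "I \<in> K"
    hence "I \<in> sc_join (simplex_boundary I) (simplex_boundary J)" using fsc by blast
    then obtain s t where st: "I = s \<union> t" "s \<subset> I" "t \<subset> J" unfolding sc_join_def simplex_boundary_def by blast
    hence "t = {}" using assms(6) by blast
    thus False using st by blast
  qed
  have nJ: "J \<notin> K"
  proof
    assume "J \<in> K"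
    hence "J \<in> sc_join (simplex_boundary I) (simplex_boundary J)" using fsc by blast
    then obtain s t where st: "J = s \<union> t" "s \<subset> I" "t \<subset> J" unfolding sc_join_def simplex_boundary_def by blast
    hence "s = {}" using assms(6) by blast
    thus False using st by blast
  qed
  have hK: "\<forall>a\<in>I. \<forall>a'\<in>J. I \<union> J - {a,a'} \<in> K"
  proof (intro ballI)
    fix a a' assume a: "a \<in> I" "a' \<in> J"
    have "I \<union> J - {a,a'} = (I - {a}) \<union> (J - {a'})" using a assms(6) by blast
    moreover have "I - {a} \<subset> I" "J - {a'} \<subset> J" using a by auto
    ultimately have "I \<union> J - {a,a'} \<in> sc_join (simplex_boundary I) (simplex_boundary J)"
      unfolding sc_join_def simplex_boundary_def by blast
    thus "I \<union> J - {a,a'} \<in> K" using fsc[of "I \<union> J - {a,a'}"] by blast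
  qed
  define c1 :: "'k kel" where "c1 = delta ({i}, ind (I - {i}))"
  define c2 :: "'k kel" where "c2 = delta ({i'}, ind (J - {i'}))"
  have cyc1: "kcycle m K c1" and pos1: "kpositive m c1"
    unfolding c1_def by (rule delta_cycle[OF sc assms(4) i hI[OF i] nI])+
  have cyc2: "kcycle m K c2" and pos2: "kpositive m c2"
    unfolding c2_def by (rule delta_cycle[OF sc assms(5) i' hJ[OF i'] nJ])+
  define c :: "nat \<Rightarrow> 'k kel" where "c = (\<lambda>k. if k = 1 then c1 else c2)"
  have cc: "\<forall>k\<in>{1..2}. kcycle m K (c k) \<and> kpositive m (c k)"
    using cyc1 pos1 cyc2 pos2 unfolding c_def by auto
  have zk: "kelem m K (\<lambda>_. 0::'k)" unfolding kelem_def ksupp_def by simp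
  have zd: "kdiff m K (\<lambda>_. 0::'k) = (\<lambda>_. 0)" by (rule ext) (rule kdiff_zero)
  have "defining_system m K 2 c (\<lambda>i j. c i)"
    unfolding defining_system_def
  proof (intro conjI allI impI ballI)
    fix k :: nat assume "k \<in> {1..2}"
    show "kelem m K (c k)" using cc \<open>k \<in> {1..2}\<close> unfolding kcycle_def by blast
    show "khomologous m K (c k) (c k)" unfolding khomologous_def kboundary_def
      using zk zd by auto
  next
    fix k l :: nat assume "1 \<le> k \<and> k < l \<and> l \<le> 2 \<and> (k, l) \<noteq> (1, 2)"
    hence False by auto
    thus "kelem m K (c k)" by blast
  next
    fix k l :: nat assume "1 \<le> k \<and> k < l \<and> l \<le> 2 \<and> (k, l) \<noteq> (1, 2)"
    hence False by auto
    thus "kdiff m K (c k) = (\<lambda>b. \<Sum>ka\<in>{k..<l}. kmult m K (kbar (c k)) (c (Suc ka)) b)" by blast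
  qed
  hence "\<exists>A. defining_system m K 2 c A" by blast
  with gol cc obtain A where dsA: "defining_system m K 2 c A" and bd: "kboundary m K (massey_value m K 2 A)"
    unfolding golod_def by (metis le_refl)
  have Ah: "\<forall>k\<in>{1..2}. khomologous m K (A k k) (c k)" using dsA unfolding defining_system_def by blast
  have "khomologous m K (A 1 1) (c 1)" using Ah by simp
  hence A1: "khomologous m K (A 1 1) c1" unfolding c_def by simp
  have "khomologous m K (A 2 2) (c 2)" using Ah by simp
  hence A2: "khomologous m K (A 2 2) c2" unfolding c_def by simp
  obtain y1 where y1: "kdiff m K y1 = (\<lambda>b. A 1 1 b - c1 b)" using A1 unfolding khomologous_def kboundary_def by blast
  obtain y2 where y2: "kdiff m K y2 = (\<lambda>b. A 2 2 b - c2 b)" using A2 unfolding khomologous_def kboundary_def by blast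
  obtain w where w: "kdiff m K w = massey_value m K 2 A" using bd unfolding kboundary_def by blast
  have mv: "massey_value m K 2 A = (\<lambda>b. kmult m K (kbar (A 1 1)) (A 2 2) b)"
  proof -
    have s12: "{1..<2::nat} = {1}" by auto
    show ?thesis unfolding massey_value_def s12 by (simp add: numeral_2_eq_2)
  qed
  have dc1: "kdiff m K c1 = (\<lambda>_. 0)" and dc2: "kdiff m K c2 = (\<lambda>_. 0)" using cyc1 cyc2 unfolding kcycle_def by auto
  have z1: "A 1 1 = (\<lambda>b. c1 b + kdiff m K y1 b)" using y1 by (simp add: fun_eq_iff)
  have z2: "A 2 2 = (\<lambda>b. c2 b + kdiff m K y2 b)" using y2 by (simp add: fun_eq_iff)
  have dz2: "kdiff m K (A 2 2) = (\<lambda>_. 0)"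
    by (rule ext) (simp add: z2 kdiff_add dc2 dd[OF sc])
  define W1 where "W1 = kmult m K (par y1) (A 2 2)"
  define W2 where "W2 = kmult m K (\<lambda>b. - c1 b) y2"
  have kb1: "kbar (A 1 1) = (\<lambda>b. kbar c1 b + kdiff m K (par y1) b)"
    unfolding z1 kbar_add by (simp add: kbar_kdiff)
  have e1: "kmult m K (kdiff m K (par y1)) (A 2 2) b = kdiff m K W1 b" for b
    using leibniz[OF sc, of "par y1" "A 2 2" b] unfolding W1_def dz2 mult_zero2 by simp
  have pc1: "par (\<lambda>b. - c1 b) = kbar c1" by (rule ext) (simp add: kbar_par)
  have e2: "kmult m K (kbar c1) (kdiff m K y2) b = kdiff m K W2 b" for b
  proof -
    have "kdiff m K (\<lambda>b. - c1 b) = (\<lambda>_. 0)" by (rule ext) (simp add: kdiff_neg dc1)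
    thus ?thesis using leibniz[OF sc, of "\<lambda>b. - c1 b" y2 b] unfolding W2_def pc1 by (simp add: mult_zero1)
  qed
  have Mb: "massey_value m K 2 A b = kmult m K (kbar c1) c2 b + kdiff m K W2 b + kdiff m K W1 b" for b
  proof -
    have "massey_value m K 2 A b = kmult m K (kbar c1) (A 2 2) b + kmult m K (kdiff m K (par y1)) (A 2 2) b"
      unfolding mv kb1 by (simp add: mult_add1)
    also have "kmult m K (kbar c1) (A 2 2) b = kmult m K (kbar c1) c2 b + kmult m K (kbar c1) (kdiff m K y2) b"
      unfolding z2 by (simp add: mult_add2)
    finally show ?thesis unfolding e1 e2 .
  qed
  have "phi I J (massey_value m K 2 A) = phi I J (kmult m K (kbar c1) c2) + phi I J (kdiff m K W2) + phi I J (kdiff m K W1)"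
    by (rule phi_add3) (rule Mb)
  also have "\<dots> = 1"
    unfolding c1_def c2_def phi_d[OF assms(4,5,6) hK] prod_phi[OF assms(4,5,6) hK i i'] by simp
  finally have "phi I J (massey_value m K 2 A) = (1::'k)" .
  moreover have "phi I J (massey_value m K 2 A) = (0::'k)" unfolding w[symmetric] by (rule phi_d[OF assms(4,5,6) hK])
  ultimately show False using assms(8) by simp
qed

end
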